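(* For each $n$, let $\{\eta_{n,v}: v\in V_n\}$ be a centered Gaussian field indexed by a finite nonempty set $V_n$, and suppose there is a fixed $\lambda>1$ with $\operatorname{Var}(\eta_{n,v})\le n$ for all $v\in V_n$, $\frac1n\log|V_n|\to\log\lambda$, and $$\lim_{n\to\infty}\frac{\mathbb{E}[\sup_{v\in V_n}\eta_{n,v}]}{n\sqrt{2\log\lambda}}=1.$$ Then for every $\epsilon>0$ there exist $c>0$ and deterministic subsets $W_n\subseteq V_n$ such that, for all sufficiently large $n$, $|W_n|\ge e^{cn}$ and $$\mathbb{E}(\eta_{n,u}\eta_{n,v})\le \epsilon\sqrt{\operatorname{Var}(\eta_{n,u})\operatorname{Var}(\eta_{n,v})}\quad\text{for all distinct } u,v\in W_n.$$ *)

theory Defs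
  imports "HOL-Probability.Probability"
begin

definition centered_normal_rv :: "'b measure \<Rightarrow> ('b \<Rightarrow> real) \<Rightarrow> bool" where
  "centered_normal_rv M X \<longleftrightarrow>
     X \<in> borel_measurable M \<and>
     ((AE \<omega> in M. X \<omega> = 0) \<or> (\<exists>\<sigma>>0. distributed M lborel X (normal_density 0 \<sigma>)))"

definition centered_gaussian_field :: "'b measure \<Rightarrow> 'a set \<Rightarrow> ('a \<Rightarrow> 'b \<Rightarrow> real) \<Rightarrow> bool" where
  "centered_gaussian_field M V \<eta> \<longleftrightarrow>
     prob_space M \<and> finite V \<and>
     (\<forall>v\<in>V. \<eta> v \<in> borel_measurable M) \<and>
     (\<forall>a :: 'a \<Rightarrow> real. centered_normal_rv M (\<lambda>\<omega>. \<Sum>v\<in>V. a v * \<eta> v \<omega>))"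

end

theory Submission
  imports Defs
begin


lemma normal_mgf_identity:
  fixes \<sigma> t x :: real assumes "\<sigma> > 0"
  shows "normal_density 0 \<sigma> x * exp (t * x) = exp (t^2 * \<sigma>^2 / 2) * normal_density (t * \<sigma>^2) \<sigma> x"
proof -
  have e: "-(x - 0)\<^sup>2/ (2 * \<sigma>\<^sup>2) + t * x = t^2 * \<sigma>^2 / 2 + (-(x - t * \<sigma>^2)\<^sup>2/ (2 * \<sigma>\<^sup>2))"
    using assms by (simp add: field_simps power2_eq_square)
  have "exp (-(x - 0)\<^sup>2/ (2 * \<sigma>\<^sup>2)) * exp (t * x) = exp (t^2 * \<sigma>^2 / 2) * exp (-(x - t * \<sigma>^2)\<^sup>2/ (2 * \<sigma>\<^sup>2))"
    unfolding mult_exp_exp e ..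
  then show ?thesis unfolding normal_density_def
    by (metis (no_types, lifting) mult.assoc mult.left_commute)
qed

lemma (in prob_space) centered_normal_facts:
  assumes "centered_normal_rv M X"
  shows "integrable M X" "integrable M (\<lambda>\<omega>. (X \<omega>)^2)" "expectation X = 0"
    "\<And>t. integrable M (\<lambda>\<omega>. exp (t * X \<omega>))"
    "\<And>t. expectation (\<lambda>\<omega>. exp (t * X \<omega>)) = exp (t^2 * expectation (\<lambda>\<omega>. (X \<omega>)^2) / 2)"
proof -
  have Xm: "X \<in> borel_measurable M" using assms unfolding centered_normal_rv_def by simp
  have "(AE \<omega> in M. X \<omega> = 0) \<or> (\<exists>\<sigma>>0. distributed M lborel X (normal_density 0 \<sigma>))"
    using assms unfolding centered_normal_rv_def by simp
  then have all: "integrable M X \<and> integrable M (\<lambda>\<omega>. (X \<omega>)^2) \<and> expectation X = 0 \<and>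
    (\<forall>t. integrable M (\<lambda>\<omega>. exp (t * X \<omega>)) \<and>
    expectation (\<lambda>\<omega>. exp (t * X \<omega>)) = exp (t^2 * expectation (\<lambda>\<omega>. (X \<omega>)^2) / 2))"
  proof
    assume ae: "AE \<omega> in M. X \<omega> = 0"
    have i1: "integrable M X" 
      by (rule integrable_cong_AE_imp[of _ "\<lambda>_. 0"]) (use ae Xm in auto)
    have i2: "integrable M (\<lambda>\<omega>. (X \<omega>)^2)" 
      by (rule integrable_cong_AE_imp[of _ "\<lambda>_. 0"]) (use ae Xm in auto)
    have e1: "expectation X = 0" using integral_cong_AE[of X M "\<lambda>_. 0"] ae Xm by auto
    have e2: "expectation (\<lambda>\<omega>. (X \<omega>)^2) = 0" using integral_cong_AE[of "\<lambda>\<omega>. (X \<omega>)^2" M "\<lambda>_. 0"] ae Xm by auto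
    have "\<forall>t. integrable M (\<lambda>\<omega>. exp (t * X \<omega>)) \<and> expectation (\<lambda>\<omega>. exp (t * X \<omega>)) = 1"
    proof
      fix t
      have "integrable M (\<lambda>\<omega>. exp (t * X \<omega>))"
        by (rule integrable_cong_AE_imp[of _ "\<lambda>_. 1"]) (use ae Xm in auto)
      moreover have "expectation (\<lambda>\<omega>. exp (t * X \<omega>)) = expectation (\<lambda>_. 1)"
        by (rule integral_cong_AE) (use ae Xm in auto)
      ultimately show "integrable M (\<lambda>\<omega>. exp (t * X \<omega>)) \<and> expectation (\<lambda>\<omega>. exp (t * X \<omega>)) = 1"
        by (simp add: prob_space)
    qed
    then show ?thesis using i1 i2 e1 e2 by simp
  next
    assume "\<exists>\<sigma>>0. distributed M lborel X (normal_density 0 \<sigma>)"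
    then obtain \<sigma> where s: "\<sigma> > 0" and D: "distributed M lborel X (normal_density 0 \<sigma>)" by auto
    have e1: "expectation X = 0" using normal_distributed_expectation[OF s D] .
    have v: "variance X = \<sigma>^2" using normal_distributed_variance[OF s D] .
    have i1: "integrable M X"
      using distributed_integrable[OF D, of "\<lambda>x. x"] integrable_normal_moment_nz_1[of \<sigma> 0] s by simp
    have i2: "integrable M (\<lambda>\<omega>. (X \<omega>)^2)"
      using distributed_integrable[OF D, of "\<lambda>x. x^2"] integrable_normal_moment[OF s, of 0 2] by simp
    have e2: "expectation (\<lambda>\<omega>. (X \<omega>)^2) = \<sigma>^2" using v e1 by simp
    have "\<forall>t. integrable M (\<lambda>\<omega>. exp (t * X \<omega>)) \<and>
       expectation (\<lambda>\<omega>. exp (t * X \<omega>)) = exp (t^2 * \<sigma>^2 / 2)"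
    proof
      fix t
      have ii: "integrable lborel (\<lambda>x. normal_density 0 \<sigma> x * exp (t * x))"
        unfolding normal_mgf_identity[OF s] using s by simp
      have "integrable M (\<lambda>\<omega>. exp (t * X \<omega>))"
        using distributed_integrable[OF D, of "\<lambda>x. exp (t * x)"] ii by simp
      moreover have "expectation (\<lambda>\<omega>. exp (t * X \<omega>)) = exp (t^2 * \<sigma>^2 / 2)"
        using distributed_integral[OF D, of "\<lambda>x. exp (t * x)", symmetric] s
        unfolding normal_mgf_identity[OF s] by simp
      ultimately show "integrable M (\<lambda>\<omega>. exp (t * X \<omega>)) \<and>
       expectation (\<lambda>\<omega>. exp (t * X \<omega>)) = exp (t^2 * \<sigma>^2 / 2)" by simp
    qed
    then show ?thesis using i1 i2 e1 e2 by simp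
  qed
  then show "integrable M X" "integrable M (\<lambda>\<omega>. (X \<omega>)^2)" "expectation X = 0"
    "\<And>t. integrable M (\<lambda>\<omega>. exp (t * X \<omega>))"
    "\<And>t. expectation (\<lambda>\<omega>. exp (t * X \<omega>)) = exp (t^2 * expectation (\<lambda>\<omega>. (X \<omega>)^2) / 2)"
    by auto
qed



lemma (in prob_space) max_bound:
  fixes X :: "'i \<Rightarrow> 'a \<Rightarrow> real"
  assumes I: "finite I" "I \<noteq> {}" and t: "t > 0"
    and meas: "\<And>i. i \<in> I \<Longrightarrow> X i \<in> borel_measurable M"
    and int: "\<And>i. i \<in> I \<Longrightarrow> integrable M (X i)"
    and inte: "\<And>i. i \<in> I \<Longrightarrow> integrable M (\<lambda>\<omega>. exp (t * X i \<omega>))"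
    and mgf: "\<And>i. i \<in> I \<Longrightarrow> expectation (\<lambda>\<omega>. exp (t * X i \<omega>)) \<le> exp (t^2 * \<sigma>2 / 2)"
  shows "integrable M (\<lambda>\<omega>. Max ((\<lambda>i. X i \<omega>) ` I))"
    "expectation (\<lambda>\<omega>. Max ((\<lambda>i. X i \<omega>) ` I)) \<le> ln (real (card I)) / t + t * \<sigma>2 / 2"
proof -
  define Y where "Y = (\<lambda>\<omega>. Max ((\<lambda>i. X i \<omega>) ` I))"
  have Ym: "Y \<in> borel_measurable M" unfolding Y_def
    by (rule borel_measurable_Max[OF I(1)]) (rule meas)
  have att: "\<exists>i\<in>I. Y \<omega> = X i \<omega>" for \<omega>
  proof -
    have "Y \<omega> \<in> (\<lambda>i. X i \<omega>) ` I" unfolding Y_def using I by (intro Max_in) auto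
    then show ?thesis by auto
  qed
  have Yi: "integrable M Y"
  proof (rule Bochner_Integration.integrable_bound[of _ "\<lambda>\<omega>. \<Sum>i\<in>I. \<bar>X i \<omega>\<bar>"])
    show "integrable M (\<lambda>\<omega>. \<Sum>i\<in>I. \<bar>X i \<omega>\<bar>)" using int by auto
    show "AE x in M. norm (Y x) \<le> norm (\<Sum>i\<in>I. \<bar>X i x\<bar>)"
    proof (intro AE_I2)
      fix x assume "x \<in> space M"
      obtain i where "i \<in> I" "Y x = X i x" using att by blast
      then have "\<bar>Y x\<bar> \<le> (\<Sum>i\<in>I. \<bar>X i x\<bar>)"
        using I by (auto intro!: member_le_sum)
      then show "norm (Y x) \<le> norm (\<Sum>i\<in>I. \<bar>X i x\<bar>)" by simp
    qed
  qed (rule Ym)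
  have pt: "exp (t * Y \<omega>) \<le> (\<Sum>i\<in>I. exp (t * X i \<omega>))" for \<omega>
  proof -
    obtain i where "i \<in> I" "Y \<omega> = X i \<omega>" using att by blast
    then show ?thesis using I by (auto intro!: member_le_sum)
  qed
  have Yei: "integrable M (\<lambda>\<omega>. exp (t * Y \<omega>))"
  proof (rule Bochner_Integration.integrable_bound[of _ "\<lambda>\<omega>. \<Sum>i\<in>I. exp (t * X i \<omega>)"])
    show "integrable M (\<lambda>\<omega>. \<Sum>i\<in>I. exp (t * X i \<omega>))" using inte by auto
    show "AE x in M. norm (exp (t * Y x)) \<le> norm (\<Sum>i\<in>I. exp (t * X i x))"
      using pt by (auto intro!: AE_I2 simp: sum_nonneg)
  qed (use Ym in simp)
  define m where "m = expectation Y"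
  have low: "exp (t * m) * (1 + (t * Y \<omega> - t * m)) \<le> exp (t * Y \<omega>)" for \<omega>
  proof -
    have "1 + (t * Y \<omega> - t * m) \<le> exp (t * Y \<omega> - t * m)" by (rule exp_ge_add_one_self)
    then have "exp (t * m) * (1 + (t * Y \<omega> - t * m)) \<le> exp (t * m) * exp (t * Y \<omega> - t * m)"
      by (intro mult_left_mono) auto
    also have "\<dots> = exp (t * Y \<omega>)" by (simp add: mult_exp_exp)
    finally show ?thesis .
  qed
  have "expectation (\<lambda>\<omega>. exp (t * m) * (1 + (t * Y \<omega> - t * m))) = exp (t * m)"
    using Yi by (simp add: prob_space m_def algebra_simps)
  moreover have "expectation (\<lambda>\<omega>. exp (t * m) * (1 + (t * Y \<omega> - t * m))) \<le> expectation (\<lambda>\<omega>. exp (t * Y \<omega>))"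
    by (rule integral_mono[OF _ Yei low]) (use Yi in auto)
  moreover have "expectation (\<lambda>\<omega>. exp (t * Y \<omega>)) \<le> expectation (\<lambda>\<omega>. \<Sum>i\<in>I. exp (t * X i \<omega>))"
    by (rule integral_mono[OF Yei _ pt]) (use inte in auto)
  moreover have "expectation (\<lambda>\<omega>. \<Sum>i\<in>I. exp (t * X i \<omega>)) = (\<Sum>i\<in>I. expectation (\<lambda>\<omega>. exp (t * X i \<omega>)))"
    by (rule Bochner_Integration.integral_sum) (use inte in auto)
  moreover have "(\<Sum>i\<in>I. expectation (\<lambda>\<omega>. exp (t * X i \<omega>))) \<le> (\<Sum>i\<in>I. exp (t^2 * \<sigma>2 / 2))"
    by (rule sum_mono) (rule mgf)
  ultimately have "exp (t * m) \<le> real (card I) * exp (t^2 * \<sigma>2 / 2)" by simp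
  then have "ln (exp (t * m)) \<le> ln (real (card I) * exp (t^2 * \<sigma>2 / 2))"
    using I by (subst ln_le_cancel_iff) (auto simp: card_gt_0_iff)
  also have "\<dots> = ln (real (card I)) + t^2 * \<sigma>2 / 2"
    using I by (subst ln_mult) (auto simp: card_gt_0_iff)
  finally have "t * m \<le> ln (real (card I)) + t^2 * \<sigma>2 / 2" by simp
  then have "m \<le> (ln (real (card I)) + t^2 * \<sigma>2 / 2) / t" using t by (simp add: field_simps)
  also have "\<dots> = ln (real (card I)) / t + t * \<sigma>2 / 2" using t by (simp add: field_simps power2_eq_square)
  finally show "expectation (\<lambda>\<omega>. Max ((\<lambda>i. X i \<omega>) ` I)) \<le> ln (real (card I)) / t + t * \<sigma>2 / 2"
    unfolding m_def Y_def .
  show "integrable M (\<lambda>\<omega>. Max ((\<lambda>i. X i \<omega>) ` I))" using Yi unfolding Y_def .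
qed



lemma (in prob_space) field_lincomb:
  assumes F: "centered_gaussian_field M V \<eta>" and uv: "u \<in> V" "v \<in> V"
  shows "centered_normal_rv M (\<lambda>\<omega>. \<alpha> * \<eta> u \<omega> + \<beta> * \<eta> v \<omega>)"
proof -
  have fin: "finite V" using F unfolding centered_gaussian_field_def by simp
  define a where "a = (\<lambda>x. (if x = u then \<alpha> else 0) + (if x = v then \<beta> else 0))"
  have "centered_normal_rv M (\<lambda>\<omega>. \<Sum>x\<in>V. a x * \<eta> x \<omega>)"
    using F unfolding centered_gaussian_field_def by simp
  moreover have "(\<lambda>\<omega>. \<Sum>x\<in>V. a x * \<eta> x \<omega>) = (\<lambda>\<omega>. \<alpha> * \<eta> u \<omega> + \<beta> * \<eta> v \<omega>)"
  proof
    fix \<omega>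
    have "a x * \<eta> x \<omega> = (if x = u then \<alpha> * \<eta> x \<omega> else 0) + (if x = v then \<beta> * \<eta> x \<omega> else 0)" for x
      by (simp add: a_def distrib_right)
    then have "(\<Sum>x\<in>V. a x * \<eta> x \<omega>) = (\<Sum>x\<in>V. (if x = u then \<alpha> * \<eta> x \<omega> else 0)) + (\<Sum>x\<in>V. (if x = v then \<beta> * \<eta> x \<omega> else 0))"
      by (simp add: sum.distrib)
    also have "\<dots> = \<alpha> * \<eta> u \<omega> + \<beta> * \<eta> v \<omega>" using fin uv by (simp add: sum.delta)
    finally show "(\<Sum>x\<in>V. a x * \<eta> x \<omega>) = \<alpha> * \<eta> u \<omega> + \<beta> * \<eta> v \<omega>" .
  qed
  ultimately show ?thesis by simp
qed

lemma (in prob_space) field_single: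
  assumes F: "centered_gaussian_field M V \<eta>" and u: "u \<in> V"
  shows "centered_normal_rv M (\<eta> u)"
  using field_lincomb[OF F u u, of 1 0] by simp

lemma (in prob_space) field_prod_int:
  assumes F: "centered_gaussian_field M V \<eta>" and uv: "u \<in> V" "v \<in> V"
  shows "integrable M (\<lambda>\<omega>. \<eta> u \<omega> * \<eta> v \<omega>)"
proof -
  have a: "integrable M (\<lambda>\<omega>. (1 * \<eta> u \<omega> + 1 * \<eta> v \<omega>)^2)"
    using centered_normal_facts(2)[OF field_lincomb[OF F uv, of 1 1]] .
  have b: "integrable M (\<lambda>\<omega>. (\<eta> u \<omega>)^2)" using centered_normal_facts(2)[OF field_single[OF F uv(1)]] .
  have c: "integrable M (\<lambda>\<omega>. (\<eta> v \<omega>)^2)" using centered_normal_facts(2)[OF field_single[OF F uv(2)]] .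
  have "integrable M (\<lambda>\<omega>. ((1 * \<eta> u \<omega> + 1 * \<eta> v \<omega>)^2 - (\<eta> u \<omega>)^2 - (\<eta> v \<omega>)^2) / 2)"
    using a b c by auto
  moreover have "(\<lambda>\<omega>. ((1 * \<eta> u \<omega> + 1 * \<eta> v \<omega>)^2 - (\<eta> u \<omega>)^2 - (\<eta> v \<omega>)^2) / 2) = (\<lambda>\<omega>. \<eta> u \<omega> * \<eta> v \<omega>)"
    by (simp add: power2_eq_square algebra_simps)
  ultimately show ?thesis by simp
qed

lemma (in prob_space) field_quad:
  assumes F: "centered_gaussian_field M V \<eta>" and uv: "u \<in> V" "v \<in> V"
  shows "expectation (\<lambda>\<omega>. (\<alpha> * \<eta> u \<omega> + \<beta> * \<eta> v \<omega>)^2) =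
     \<alpha>^2 * expectation (\<lambda>\<omega>. \<eta> u \<omega> * \<eta> u \<omega>) + 2 * \<alpha> * \<beta> * expectation (\<lambda>\<omega>. \<eta> u \<omega> * \<eta> v \<omega>)
     + \<beta>^2 * expectation (\<lambda>\<omega>. \<eta> v \<omega> * \<eta> v \<omega>)"
proof -
  have i1: "integrable M (\<lambda>\<omega>. \<eta> u \<omega> * \<eta> u \<omega>)" using field_prod_int[OF F uv(1) uv(1)] .
  have i2: "integrable M (\<lambda>\<omega>. \<eta> u \<omega> * \<eta> v \<omega>)" using field_prod_int[OF F uv] .
  have i3: "integrable M (\<lambda>\<omega>. \<eta> v \<omega> * \<eta> v \<omega>)" using field_prod_int[OF F uv(2) uv(2)] .
  have "(\<lambda>\<omega>. (\<alpha> * \<eta> u \<omega> + \<beta> * \<eta> v \<omega>)^2) = (\<lambda>\<omega>. \<alpha>^2 * (\<eta> u \<omega> * \<eta> u \<omega>) + (2 * \<alpha> * \<beta> * (\<eta> u \<omega> * \<eta> v \<omega>)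
     + \<beta>^2 * (\<eta> v \<omega> * \<eta> v \<omega>)))"
    by (simp add: power2_eq_square algebra_simps)
  then show ?thesis using i1 i2 i3 by (simp add: add.assoc)
qed

lemma (in prob_space) field_var:
  assumes F: "centered_gaussian_field M V \<eta>" and u: "u \<in> V"
  shows "variance (\<eta> u) = expectation (\<lambda>\<omega>. \<eta> u \<omega> * \<eta> u \<omega>)"
  using centered_normal_facts(3)[OF field_single[OF F u]] by (simp add: power2_eq_square)

lemma (in prob_space) field_comb_facts:
  fixes \<alpha> \<beta> :: real
  assumes F: "centered_gaussian_field M V \<eta>" and uv: "u \<in> V" "v \<in> V"
  defines "Z \<equiv> (\<lambda>\<omega>. \<alpha> * \<eta> u \<omega> + \<beta> * \<eta> v \<omega>)"
  defines "Q \<equiv> \<alpha>^2 * expectation (\<lambda>\<omega>. \<eta> u \<omega> * \<eta> u \<omega>) + 2 * \<alpha> * \<beta> * expectation (\<lambda>\<omega>. \<eta> u \<omega> * \<eta> v \<omega>)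
     + \<beta>^2 * expectation (\<lambda>\<omega>. \<eta> v \<omega> * \<eta> v \<omega>)"
  shows "Z \<in> borel_measurable M" "integrable M Z" "Q \<ge> 0"
    "\<And>t. integrable M (\<lambda>\<omega>. exp (t * Z \<omega>))"
    "\<And>t. expectation (\<lambda>\<omega>. exp (t * Z \<omega>)) = exp (t^2 * Q / 2)"
proof -
  have N: "centered_normal_rv M Z" unfolding Z_def by (rule field_lincomb[OF F uv])
  have EQ: "expectation (\<lambda>\<omega>. (Z \<omega>)^2) = Q" unfolding Z_def Q_def by (rule field_quad[OF F uv])
  show "Z \<in> borel_measurable M" using N unfolding centered_normal_rv_def by simp
  show "integrable M Z" using centered_normal_facts(1)[OF N] .
  show "Q \<ge> 0" unfolding EQ[symmetric] by (rule integral_nonneg_AE) auto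
  show "\<And>t. integrable M (\<lambda>\<omega>. exp (t * Z \<omega>))" using centered_normal_facts(4)[OF N] .
  show "\<And>t. expectation (\<lambda>\<omega>. exp (t * Z \<omega>)) = exp (t^2 * Q / 2)" 
    using centered_normal_facts(5)[OF N] EQ by simp
qed



lemma (in prob_space) field_comb_bound:
  fixes \<alpha> \<beta> :: real
  assumes F: "centered_gaussian_field M V \<eta>" and uv: "u \<in> V" "v \<in> V"
    and QB: "\<alpha>^2 * expectation (\<lambda>\<omega>. \<eta> u \<omega> * \<eta> u \<omega>) + 2 * \<alpha> * \<beta> * expectation (\<lambda>\<omega>. \<eta> u \<omega> * \<eta> v \<omega>)
     + \<beta>^2 * expectation (\<lambda>\<omega>. \<eta> v \<omega> * \<eta> v \<omega>) \<le> B"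
  shows "(\<lambda>\<omega>. \<alpha> * \<eta> u \<omega> + \<beta> * \<eta> v \<omega>) \<in> borel_measurable M \<and> integrable M (\<lambda>\<omega>. \<alpha> * \<eta> u \<omega> + \<beta> * \<eta> v \<omega>)
    \<and> (\<forall>t. integrable M (\<lambda>\<omega>. exp (t * (\<alpha> * \<eta> u \<omega> + \<beta> * \<eta> v \<omega>))))
    \<and> (\<forall>t. expectation (\<lambda>\<omega>. exp (t * (\<alpha> * \<eta> u \<omega> + \<beta> * \<eta> v \<omega>))) \<le> exp (t^2 * B / 2))"
proof -
  note fc = field_comb_facts[OF F uv, where \<alpha>=\<alpha> and \<beta>=\<beta>]
  have "expectation (\<lambda>\<omega>. exp (t * (\<alpha> * \<eta> u \<omega> + \<beta> * \<eta> v \<omega>))) \<le> exp (t^2 * B / 2)" for t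
  proof -
    have "t^2 * (\<alpha>^2 * expectation (\<lambda>\<omega>. \<eta> u \<omega> * \<eta> u \<omega>) + 2 * \<alpha> * \<beta> * expectation (\<lambda>\<omega>. \<eta> u \<omega> * \<eta> v \<omega>)
     + \<beta>^2 * expectation (\<lambda>\<omega>. \<eta> v \<omega> * \<eta> v \<omega>)) \<le> t^2 * B"
      by (rule mult_left_mono[OF QB]) simp
    then show ?thesis using fc(5)[of t] by simp
  qed
  then show ?thesis using fc(1,2,4) by blast
qed

lemma (in prob_space) decomp_bound:
  fixes \<eta> :: "'i \<Rightarrow> 'a \<Rightarrow> real"
  assumes F: "centered_gaussian_field M V \<eta>" and Vne: "V \<noteq> {}"
    and varb: "\<And>v. v \<in> V \<Longrightarrow> variance (\<eta> v) \<le> N"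
    and eps: "0 < \<epsilon>" "\<epsilon> < 1"
    and W: "W \<subseteq> V"
    and maxl: "\<And>v. v \<in> V \<Longrightarrow> v \<notin> W \<Longrightarrow> \<exists>w\<in>W. expectation (\<lambda>\<omega>. \<eta> v \<omega> * \<eta> w \<omega>) > \<epsilon> * sqrt (variance (\<eta> v) * variance (\<eta> w))"
    and t1: "t1 > 0" and t2: "t2 > 0"
  shows "expectation (\<lambda>\<omega>. Max ((\<lambda>v. \<eta> v \<omega>) ` V)) \<le> (ln (real (card W + 1)) / t1 + t1 * N / 2) + (ln (real (card V)) / t2 + t2 * (N * (1 - \<epsilon>^2)) / 2)"
proof -
  have finV: "finite V" using F unfolding centered_gaussian_field_def by simp
  have finW: "finite W" using finV W finite_subset by blast
  obtain v0 where v0: "v0 \<in> V" using Vne by blast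
  define S where "S = (\<lambda>v. expectation (\<lambda>\<omega>. \<eta> v \<omega> * \<eta> v \<omega>))"
  define C where "C = (\<lambda>v w. expectation (\<lambda>\<omega>. \<eta> v \<omega> * \<eta> w \<omega>))"
  have varS: "variance (\<eta> v) = S v" if "v \<in> V" for v unfolding S_def using field_var[OF F that] .
  have Snn: "S v \<ge> 0" for v unfolding S_def by (rule integral_nonneg_AE) auto
  have Nnn: "N \<ge> 0" using varb[OF v0] varS[OF v0] Snn[of v0] by simp
  have SN: "S v \<le> N" if "v \<in> V" for v using varb[OF that] varS[OF that] by simp
  have quad: "0 \<le> \<alpha>^2 * S u + 2 * \<alpha> * \<beta> * C u v + \<beta>^2 * S v" if "u \<in> V" "v \<in> V" for u v \<alpha> \<beta>
    using field_comb_facts(3)[OF F that, of \<alpha> \<beta>] unfolding S_def C_def by simp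
  have Csym: "C v w = C w v" for v w unfolding C_def by (simp add: mult.commute)
  define cov where "cov = (\<lambda>v. \<exists>w\<in>W. C v w > \<epsilon> * sqrt (S v * S w))"
  define wv where "wv = (\<lambda>v. if cov v then (SOME w. w \<in> W \<and> C v w > \<epsilon> * sqrt (S v * S w)) else v)"
  define a where "a = (\<lambda>v. if cov v then C v (wv v) / S (wv v) else 0)"
  define c where "c = (\<lambda>w. if S w > 0 then sqrt N / sqrt (S w) else 0)"
  have wvprop: "wv v \<in> W \<and> C v (wv v) > \<epsilon> * sqrt (S v * S (wv v))" if "cov v" for v
  proof -
    have e: "\<exists>w. w \<in> W \<and> C v w > \<epsilon> * sqrt (S v * S w)" using that unfolding cov_def by blast
    have "wv v = (SOME w. w \<in> W \<and> C v w > \<epsilon> * sqrt (S v * S w))" using that unfolding wv_def by simp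
    then show ?thesis using someI_ex[OF e] by simp
  qed
  have wvV: "wv v \<in> V" if "v \<in> V" for v
  proof (cases "cov v")
    case True
    then have "wv v \<in> W \<and> C v (wv v) > \<epsilon> * sqrt (S v * S (wv v))" by (rule wvprop)
    then show ?thesis using W by auto
  qed (simp add: wv_def that)
  have uncov: "S v = 0" if "v \<in> V" "\<not> cov v" for v
  proof -
    have "v \<in> W"
    proof (rule ccontr)
      assume "v \<notin> W"
      from maxl[OF that(1) this] obtain w where w: "w \<in> W"
        and hw: "expectation (\<lambda>\<omega>. \<eta> v \<omega> * \<eta> w \<omega>) > \<epsilon> * sqrt (variance (\<eta> v) * variance (\<eta> w))" by blast
      have "w \<in> V" using w W by auto
      then have "C v w > \<epsilon> * sqrt (S v * S w)" using hw varS[OF that(1)] varS[of w] unfolding C_def by simp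
      then show False using that(2) w unfolding cov_def by auto
    qed
    then have "\<not> C v v > \<epsilon> * sqrt (S v * S v)" using that(2) unfolding cov_def by auto
    moreover have "C v v = S v" unfolding C_def S_def by simp
    moreover have "sqrt (S v * S v) = S v" using Snn[of v] by simp
    ultimately have "S v \<le> \<epsilon> * S v" by simp
    then have "(1 - \<epsilon>) * S v \<le> 0" by (simp add: algebra_simps)
    then show ?thesis using Snn[of v] eps by (simp add: mult_le_0_iff)
  qed
  have covf: "wv v \<in> W \<and> C v (wv v) > \<epsilon> * sqrt (S v * S (wv v)) \<and> S (wv v) > 0 \<and> a v > 0 \<and> a v \<le> c (wv v)
      \<and> S v - 2 * a v * C v (wv v) + (a v)^2 * S (wv v) \<le> N * (1 - \<epsilon>^2)"
    if v: "v \<in> V" and cv: "cov v" for v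
  proof -
    define w where "w = wv v"
    have ww: "w \<in> W \<and> C v w > \<epsilon> * sqrt (S v * S w)"
      unfolding w_def by (rule wvprop[OF cv])
    then have wV: "w \<in> V" using W by auto
    have Cpos: "C v w > 0" using ww eps by (smt (verit) mult_nonneg_nonneg real_sqrt_ge_zero Snn)
    have Spos: "S w > 0"
    proof (rule ccontr)
      assume "\<not> S w > 0"
      then have Sw0: "S w = 0" using Snn[of w] by simp
      have "0 \<le> 1^2 * S v + 2 * 1 * (- ((S v + 1) / (2 * C v w))) * C v w + (- ((S v + 1) / (2 * C v w)))^2 * S w"
        by (rule quad[OF v wV])
      then show False using Sw0 Cpos by (simp add: field_simps)
    qed
    have q: "0 \<le> 1^2 * S v + 2 * 1 * (- (C v w / S w)) * C v w + (- (C v w / S w))^2 * S w"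
      by (rule quad[OF v wV])
    have qe: "1^2 * S v + 2 * 1 * (- (C v w / S w)) * C v w + (- (C v w / S w))^2 * S w = S v - (C v w)^2 / S w"
      using Spos by (simp add: field_simps power2_eq_square)
    have "(C v w)^2 / S w \<le> S v" using q qe by simp
    then have CS: "(C v w)^2 \<le> S v * S w" using Spos by (simp add: pos_divide_le_eq)
    have sq: "(\<epsilon> * sqrt (S v * S w))^2 < (C v w)^2"
      using ww eps Snn[of v] Snn[of w] by (intro power_strict_mono) (auto intro!: mult_nonneg_nonneg)
    then have sq2: "\<epsilon>^2 * (S v * S w) < (C v w)^2"
      using Snn[of v] Snn[of w] by (simp add: power_mult_distrib)
    have av: "a v = C v w / S w" unfolding a_def w_def using cv by simp
    have cw: "c w = sqrt N / sqrt (S w)" unfolding c_def using Spos by simp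
    have apos: "a v > 0" using av Cpos Spos by simp
    have "C v w \<le> sqrt (S v * S w)" using CS Cpos real_le_rsqrt by blast
    also have "\<dots> \<le> sqrt (N * S w)" using SN[OF v] Spos by (intro real_sqrt_le_mono mult_right_mono) auto
    finally have "C v w \<le> sqrt N * sqrt (S w)" by (simp add: real_sqrt_mult)
    then have "C v w / S w \<le> sqrt N * sqrt (S w) / S w" using Spos by (simp add: divide_right_mono)
    also have "sqrt N * sqrt (S w) / S w = sqrt N / sqrt (S w)"
    proof -
      define r where "r = sqrt (S w)"
      have r: "S w = r^2" "r > 0" unfolding r_def using Spos by auto
      show ?thesis unfolding r_def[symmetric] r(1) using r(2) by (simp add: power2_eq_square)
    qed
    finally have ac: "a v \<le> c w" using av cw by simp
    have "S v - 2 * a v * C v w + (a v)^2 * S w = S v - (C v w)^2 / S w"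
      unfolding av using Spos by (simp add: field_simps power2_eq_square)
    also have "\<dots> \<le> S v - \<epsilon>^2 * S v"
    proof -
      have "\<epsilon>^2 * S v < (C v w)^2 / S w" using sq2 Spos by (simp add: field_simps)
      then show ?thesis by simp
    qed
    also have "\<dots> = S v * (1 - \<epsilon>^2)" by (simp add: algebra_simps)
    also have "\<dots> \<le> N * (1 - \<epsilon>^2)" using SN[OF v] eps
      by (intro mult_right_mono) (auto simp: power_le_one abs_square_le_1)
    finally show ?thesis using ww Spos apos ac unfolding w_def by simp
  qed
  define \<xi> where "\<xi> = (\<lambda>v \<omega>. 1 * \<eta> v \<omega> + (- a v) * \<eta> (wv v) \<omega>)"
  have \<xi>Q: "1^2 * S v + 2 * 1 * (- a v) * C v (wv v) + (- a v)^2 * S (wv v) \<le> N * (1 - \<epsilon>^2)" if v: "v \<in> V" for v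
  proof (cases "cov v")
    case True then show ?thesis using covf[OF v True] by simp
  next
    case False
    then have "a v = 0" unfolding a_def by simp
    then show ?thesis using uncov[OF v False] Nnn eps by (simp add: power_le_one abs_square_le_1)
  qed
  have \<xi>f: "\<xi> v \<in> borel_measurable M \<and> integrable M (\<xi> v) \<and> (\<forall>t. integrable M (\<lambda>\<omega>. exp (t * \<xi> v \<omega>))) \<and>
     (\<forall>t. expectation (\<lambda>\<omega>. exp (t * \<xi> v \<omega>)) \<le> exp (t^2 * (N * (1 - \<epsilon>^2)) / 2))" if v: "v \<in> V" for v
  proof -
    have q: "1^2 * expectation (\<lambda>\<omega>. \<eta> v \<omega> * \<eta> v \<omega>) + 2 * 1 * (- a v) * expectation (\<lambda>\<omega>. \<eta> v \<omega> * \<eta> (wv v) \<omega>)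
     + (- a v)^2 * expectation (\<lambda>\<omega>. \<eta> (wv v) \<omega> * \<eta> (wv v) \<omega>) \<le> N * (1 - \<epsilon>^2)"
      using \<xi>Q[OF v] unfolding S_def C_def .
    show ?thesis using field_comb_bound[OF F v wvV[OF v] q] unfolding \<xi>_def .
  qed
  define I where "I = insert None (Some ` W)"
  define X where "X = (\<lambda>p. case p of None \<Rightarrow> (\<lambda>\<omega>. 0 * \<eta> v0 \<omega> + 0 * \<eta> v0 \<omega>) | Some w \<Rightarrow> (\<lambda>\<omega>. c w * \<eta> w \<omega> + 0 * \<eta> w \<omega>))"
  have Xf: "X p \<in> borel_measurable M \<and> integrable M (X p) \<and> (\<forall>t. integrable M (\<lambda>\<omega>. exp (t * X p \<omega>))) \<and>
     (\<forall>t. expectation (\<lambda>\<omega>. exp (t * X p \<omega>)) \<le> exp (t^2 * N / 2))" if p: "p \<in> I" for p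
  proof (cases p)
    case None
    have q: "0^2 * expectation (\<lambda>\<omega>. \<eta> v0 \<omega> * \<eta> v0 \<omega>) + 2 * 0 * 0 * expectation (\<lambda>\<omega>. \<eta> v0 \<omega> * \<eta> v0 \<omega>)
     + 0^2 * expectation (\<lambda>\<omega>. \<eta> v0 \<omega> * \<eta> v0 \<omega>) \<le> N" using Nnn by simp
    show ?thesis using field_comb_bound[OF F v0 v0 q] unfolding X_def None by simp
  next
    case (Some w)
    then have wV: "w \<in> V" using p W unfolding I_def by auto
    have "(c w)^2 * S w \<le> N"
    proof (cases "S w > 0")
      case True
      then show ?thesis unfolding c_def using Nnn by (simp add: power_divide)
    qed (simp add: c_def Nnn)
    then have q: "(c w)^2 * expectation (\<lambda>\<omega>. \<eta> w \<omega> * \<eta> w \<omega>) + 2 * c w * 0 * expectation (\<lambda>\<omega>. \<eta> w \<omega> * \<eta> w \<omega>)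
     + 0^2 * expectation (\<lambda>\<omega>. \<eta> w \<omega> * \<eta> w \<omega>) \<le> N" unfolding S_def by simp
    show ?thesis using field_comb_bound[OF F wV wV q] unfolding X_def Some by simp
  qed
  have finI: "finite I" "I \<noteq> {}" unfolding I_def using finW by auto
  have cardI: "card I = card W + 1" unfolding I_def using finW
    by (simp add: card_image)
  note MX = max_bound[OF finI t1, of X N]
  note M\<xi> = max_bound[OF finV Vne t2, of \<xi> "N * (1 - \<epsilon>^2)"]
  have MXi: "integrable M (\<lambda>\<omega>. Max ((\<lambda>i. X i \<omega>) ` I))" using MX(1) Xf by blast
  have MXb: "expectation (\<lambda>\<omega>. Max ((\<lambda>i. X i \<omega>) ` I)) \<le> ln (real (card W + 1)) / t1 + t1 * N / 2"
    using MX(2) Xf cardI by (metis (no_types, lifting))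
  have M\<xi>i: "integrable M (\<lambda>\<omega>. Max ((\<lambda>i. \<xi> i \<omega>) ` V))" using M\<xi>(1) \<xi>f by blast
  have M\<xi>b: "expectation (\<lambda>\<omega>. Max ((\<lambda>i. \<xi> i \<omega>) ` V)) \<le> ln (real (card V)) / t2 + t2 * (N * (1 - \<epsilon>^2)) / 2"
    using M\<xi>(2) \<xi>f by blast
  have M\<eta>i: "integrable M (\<lambda>\<omega>. Max ((\<lambda>v. \<eta> v \<omega>) ` V))"
  proof -
    define E where "E = (\<lambda>v \<omega>. 1 * \<eta> v \<omega> + 0 * \<eta> v \<omega>)"
    have "integrable M (\<lambda>\<omega>. Max ((\<lambda>v. E v \<omega>) ` V))"
    proof (rule max_bound(1)[OF finV Vne t2, of E N])
      fix v assume v: "v \<in> V"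
      have q: "1^2 * expectation (\<lambda>\<omega>. \<eta> v \<omega> * \<eta> v \<omega>) + 2 * 1 * 0 * expectation (\<lambda>\<omega>. \<eta> v \<omega> * \<eta> v \<omega>)
     + 0^2 * expectation (\<lambda>\<omega>. \<eta> v \<omega> * \<eta> v \<omega>) \<le> N" using SN[OF v] unfolding S_def by simp
      note fb = field_comb_bound[OF F v v q]
      show "E v \<in> borel_measurable M" "integrable M (E v)" "integrable M (\<lambda>\<omega>. exp (t2 * E v \<omega>))"
        "expectation (\<lambda>\<omega>. exp (t2 * E v \<omega>)) \<le> exp (t2^2 * N / 2)"
        using fb unfolding E_def by blast+
    qed
    then show ?thesis unfolding E_def by simp
  qed
  have pw: "Max ((\<lambda>v. \<eta> v \<omega>) ` V) \<le> Max ((\<lambda>i. X i \<omega>) ` I) + Max ((\<lambda>i. \<xi> i \<omega>) ` V)" for \<omega>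
  proof -
    have "Max ((\<lambda>v. \<eta> v \<omega>) ` V) \<in> (\<lambda>v. \<eta> v \<omega>) ` V" using finV Vne by (intro Max_in) auto
    then obtain v where v: "v \<in> V" and mv: "Max ((\<lambda>v. \<eta> v \<omega>) ` V) = \<eta> v \<omega>" by auto
    have split: "\<eta> v \<omega> = a v * \<eta> (wv v) \<omega> + \<xi> v \<omega>" unfolding \<xi>_def by simp
    have x1: "\<xi> v \<omega> \<le> Max ((\<lambda>i. \<xi> i \<omega>) ` V)" using finV v by (intro Max_ge) auto
    have None_le: "0 \<le> Max ((\<lambda>i. X i \<omega>) ` I)"
    proof -
      have "X None \<omega> \<le> Max ((\<lambda>i. X i \<omega>) ` I)" using finI unfolding I_def by (intro Max_ge) auto
      then show ?thesis unfolding X_def by simp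
    qed
    have x2: "a v * \<eta> (wv v) \<omega> \<le> Max ((\<lambda>i. X i \<omega>) ` I)"
    proof (cases "cov v")
      case False
      then show ?thesis using None_le unfolding a_def by simp
    next
      case True
      note cf = covf[OF v True]
      show ?thesis
      proof (cases "\<eta> (wv v) \<omega> \<ge> 0")
        case True
        have "a v * \<eta> (wv v) \<omega> \<le> c (wv v) * \<eta> (wv v) \<omega>" using cf True by (intro mult_right_mono) auto
        also have "\<dots> = X (Some (wv v)) \<omega>" unfolding X_def by simp
        also have "\<dots> \<le> Max ((\<lambda>i. X i \<omega>) ` I)" using finI cf unfolding I_def by (intro Max_ge) auto
        finally show ?thesis .
      next
        case False
        then have "a v * \<eta> (wv v) \<omega> \<le> 0" using cf by (intro mult_nonneg_nonpos) auto
        then show ?thesis using None_le by simp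
      qed
    qed
    show ?thesis using mv split x1 x2 by simp
  qed
  have "expectation (\<lambda>\<omega>. Max ((\<lambda>v. \<eta> v \<omega>) ` V)) \<le> expectation (\<lambda>\<omega>. Max ((\<lambda>i. X i \<omega>) ` I) + Max ((\<lambda>i. \<xi> i \<omega>) ` V))"
    by (rule integral_mono[OF M\<eta>i _ pw]) (use MXi M\<xi>i in auto)
  also have "\<dots> = expectation (\<lambda>\<omega>. Max ((\<lambda>i. X i \<omega>) ` I)) + expectation (\<lambda>\<omega>. Max ((\<lambda>i. \<xi> i \<omega>) ` V))"
    by (rule Bochner_Integration.integral_add[OF MXi M\<xi>i])
  finally show ?thesis using MXb M\<xi>b by simp
qed



lemma exists_maximal:
  assumes "finite V" "P {}"
  shows "\<exists>W\<subseteq>V. P W \<and> (\<forall>v\<in>V - W. \<not> P (insert v W))"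
proof -
  define F where "F = {W. W \<subseteq> V \<and> P W}"
  have finF: "finite F" unfolding F_def using assms(1) by auto
  have neF: "F \<noteq> {}" unfolding F_def using assms(2) by auto
  have "Max (card ` F) \<in> card ` F" using finF neF by (intro Max_in) auto
  then obtain W where W: "W \<in> F" "card W = Max (card ` F)" by auto
  have "\<not> P (insert v W)" if "v \<in> V - W" for v
  proof
    assume "P (insert v W)"
    then have "insert v W \<in> F" using W that unfolding F_def by auto
    then have "card (insert v W) \<le> Max (card ` F)" using finF by (intro Max_ge) auto
    moreover have "card (insert v W) = card W + 1" using that W assms(1) finite_subset
      unfolding F_def by (metis (mono_tags, lifting) DiffD2 card_insert_disjoint mem_Collect_eq Suc_eq_plus1)
    ultimately show False using W by simp
  qed
  then show ?thesis using W unfolding F_def by auto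
qed



theorem lemma2p1:
  fixes M :: "nat \<Rightarrow> 'b measure"
    and V :: "nat \<Rightarrow> 'a set"
    and \<eta> :: "nat \<Rightarrow> 'a \<Rightarrow> 'b \<Rightarrow> real"
    and lam :: real
  assumes field: "\<And>n. centered_gaussian_field (M n) (V n) (\<eta> n)"
    and fin: "\<And>n. finite (V n)"
    and ne: "\<And>n. V n \<noteq> {}"
    and lam: "lam > 1"
    and var: "\<And>n v. n \<ge> 1 \<Longrightarrow> v \<in> V n \<Longrightarrow> prob_space.variance (M n) (\<eta> n v) \<le> real n"
    and card_lim: "(\<lambda>n. ln (real (card (V n))) / real n) \<longlonglongrightarrow> ln lam"
    and sup_lim: "(\<lambda>n. prob_space.expectation (M n) (\<lambda>\<omega>. Max ((\<lambda>v. \<eta> n v \<omega>) ` V n))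
                       / (real n * sqrt (2 * ln lam))) \<longlonglongrightarrow> 1"
  shows "\<forall>\<epsilon>>0. \<exists>c>0. \<exists>W :: nat \<Rightarrow> 'a set. (\<forall>n. W n \<subseteq> V n) \<and>
           (\<forall>\<^sub>F n in sequentially.
              exp (c * real n) \<le> real (card (W n)) \<and>
              (\<forall>u\<in>W n. \<forall>v\<in>W n. u \<noteq> v \<longrightarrow>
                 prob_space.expectation (M n) (\<lambda>\<omega>. \<eta> n u \<omega> * \<eta> n v \<omega>)
                   \<le> \<epsilon> * sqrt (prob_space.variance (M n) (\<eta> n u) * prob_space.variance (M n) (\<eta> n v))))"
proof (intro allI impI)
  fix \<epsilon> :: real assume \<epsilon>: "\<epsilon> > 0"
  define e where "e = min \<epsilon> (1/2)"
  have e: "0 < e" "e < 1" "e \<le> \<epsilon>" unfolding e_def using \<epsilon> by auto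
  define Cv where "Cv = (\<lambda>n u v. prob_space.expectation (M n) (\<lambda>\<omega>. \<eta> n u \<omega> * \<eta> n v \<omega>))"
  define Vr where "Vr = (\<lambda>n u. prob_space.variance (M n) (\<eta> n u))"
  define good where "good = (\<lambda>n W. \<forall>u\<in>W. \<forall>v\<in>W. u \<noteq> v \<longrightarrow> Cv n u v \<le> e * sqrt (Vr n u * Vr n v))"
  have exW: "\<exists>W\<subseteq>V n. good n W \<and> (\<forall>v\<in>V n - W. \<not> good n (insert v W))" for n
    by (rule exists_maximal[OF fin]) (simp add: good_def)
  define W where "W = (\<lambda>n. SOME W. W \<subseteq> V n \<and> good n W \<and> (\<forall>v\<in>V n - W. \<not> good n (insert v W)))"
  have Wp: "W n \<subseteq> V n \<and> good n (W n) \<and> (\<forall>v\<in>V n - W n. \<not> good n (insert v (W n)))" for n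
    unfolding W_def using someI_ex[OF exW[of n]] by blast
  have maxl: "\<exists>w\<in>W n. Cv n v w > e * sqrt (Vr n v * Vr n w)" if "v \<in> V n" "v \<notin> W n" for n v
  proof -
    have g: "good n (W n)" and ng: "\<not> good n (insert v (W n))" using Wp[of n] that by auto
    from ng obtain x y where xy: "x \<in> insert v (W n)" "y \<in> insert v (W n)" "x \<noteq> y"
      "Cv n x y > e * sqrt (Vr n x * Vr n y)" unfolding good_def by force
    have sy: "Cv n x y = Cv n y x" "Vr n x * Vr n y = Vr n y * Vr n x" unfolding Cv_def
      by (simp_all add: mult.commute)
    show ?thesis
    proof (cases "x = v")
      case True
      then have "y \<in> W n" using xy by auto
      then show ?thesis using xy True by auto
    next
      case False
      then have xW: "x \<in> W n" using xy by auto
      show ?thesis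
      proof (cases "y = v")
        case True
        have h: "Cv n v x > e * sqrt (Vr n x * Vr n v)" using xy(4) True sy(1) by simp
        then show ?thesis using xW by (intro bexI[of _ x]) (simp_all add: mult.commute)
      next
        case False
        then have "y \<in> W n" using xy by auto
        then show ?thesis using g xW xy unfolding good_def by force
      qed
    qed
  qed
  define L where "L = ln lam"
  have Lpos: "L > 0" unfolding L_def using lam by simp
  define r where "r = sqrt (2 * L)"
  have rpos: "r > 0" unfolding r_def using Lpos by simp
  have r2: "r^2 = 2 * L" unfolding r_def using Lpos by simp
  define s where "s = sqrt (1 - e^2)"
  have s2: "s^2 = 1 - e^2" unfolding s_def using e by (simp add: power_le_one abs_square_le_1)
  have spos: "s > 0" unfolding s_def using e by (simp add: abs_square_less_1)
  have slt: "s < 1" unfolding s_def using e by simp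
  define q where "q = r * (1 - s) / 2"
  have qpos: "q > 0" unfolding q_def using rpos slt by simp
  define c where "c = q^2 / 2"
  have cpos: "c > 0" unfolding c_def using qpos by simp
  have ev1: "\<forall>\<^sub>F n in sequentially. prob_space.expectation (M n) (\<lambda>\<omega>. Max ((\<lambda>v. \<eta> n v \<omega>) ` V n))
                       / (real n * r) > 1 - (1 - s) / 4"
    using order_tendstoD(1)[OF sup_lim, of "1 - (1 - s) / 4"] slt unfolding r_def L_def by simp
  have ev2: "\<forall>\<^sub>F n in sequentially. ln (real (card (V n))) / real n < L * (1 + (1 - s) / 8)"
    using order_tendstoD(2)[OF card_lim, of "L * (1 + (1 - s) / 8)"] slt Lpos unfolding L_def by simp
  define K where "K = 16 * ln 2 / (q * r * (1 - s))"
  have ev3: "\<forall>\<^sub>F n in sequentially. real n > K"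
    using eventually_gt_at_top[of "nat \<lceil>K\<rceil>"] by eventually_elim linarith
  have ev4: "\<forall>\<^sub>F n in sequentially. n \<ge> (1::nat)" by (rule eventually_ge_at_top)
  have card_ev: "\<forall>\<^sub>F n in sequentially. exp (c * real n) \<le> real (card (W n))"
    using ev1 ev2 ev3 ev4
  proof eventually_elim
    case (elim n)
    show ?case
    proof (rule ccontr)
      assume "\<not> exp (c * real n) \<le> real (card (W n))"
      then have cardW: "real (card (W n)) < exp (c * real n)" by simp
      have npos: "real n > 0" using elim(4) by simp
      have ps: "prob_space (M n)" using field[of n] unfolding centered_gaussian_field_def by simp
      define Em where "Em = prob_space.expectation (M n) (\<lambda>\<omega>. Max ((\<lambda>v. \<eta> n v \<omega>) ` V n))"
      have bound: "Em \<le> (ln (real (card (W n) + 1)) / q + q * real n / 2)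
          + (ln (real (card (V n))) / (r / s) + (r / s) * (real n * (1 - e^2)) / 2)"
        unfolding Em_def
      proof (rule prob_space.decomp_bound[OF ps field ne])
        show "\<And>v. v \<in> V n \<Longrightarrow> prob_space.variance (M n) (\<eta> n v) \<le> real n" using var elim(4) by blast
        show "0 < e" "e < 1" using e by auto
        show "W n \<subseteq> V n" using Wp by blast
        show "\<And>v. v \<in> V n \<Longrightarrow> v \<notin> W n \<Longrightarrow> \<exists>w\<in>W n. prob_space.expectation (M n) (\<lambda>\<omega>. \<eta> n v \<omega> * \<eta> n w \<omega>) >
            e * sqrt (prob_space.variance (M n) (\<eta> n v) * prob_space.variance (M n) (\<eta> n w))"
          using maxl unfolding Cv_def Vr_def by blast
        show "0 < q" "0 < r / s" using qpos rpos spos by auto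
      qed
      have "1 \<le> exp (c * real n)" using cpos npos by simp
      then have "real (card (W n) + 1) \<le> 2 * exp (c * real n)" using cardW by linarith
      then have "ln (real (card (W n) + 1)) \<le> ln (2 * exp (c * real n))" by (subst ln_le_cancel_iff) auto
      also have "\<dots> = ln 2 + c * real n" by (simp add: ln_mult)
      finally have lnW: "ln (real (card (W n) + 1)) \<le> ln 2 + c * real n" .
      have T1: "ln (real (card (W n) + 1)) / q + q * real n / 2 \<le> ln 2 / q + q * real n"
      proof -
        have "ln (real (card (W n) + 1)) / q \<le> (ln 2 + c * real n) / q" using lnW qpos by (simp add: divide_right_mono)
        also have "\<dots> = ln 2 / q + q * real n / 2" unfolding c_def using qpos by (simp add: field_simps power2_eq_square)
        finally show ?thesis by simp
      qed
      have T2: "ln (real (card (V n))) / (r / s) + (r / s) * (real n * (1 - e^2)) / 2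
          = s * ln (real (card (V n))) / r + real n * s * r / 2"
        unfolding s2[symmetric] using rpos spos by (simp add: field_simps power2_eq_square)
      have lnV: "ln (real (card (V n))) < real n * L * (1 + (1 - s) / 8)"
        using elim(2) npos by (simp add: divide_less_eq mult.commute mult.left_commute)
      have T2b: "s * ln (real (card (V n))) / r < s * (real n * r * (1 + (1 - s) / 8) / 2)"
      proof -
        have "s * ln (real (card (V n))) < s * (real n * L * (1 + (1 - s) / 8))" using lnV spos by simp
        also have "real n * L * (1 + (1 - s) / 8) = real n * r^2 * (1 + (1 - s) / 8) / 2"
          using r2 by simp
        finally show ?thesis using rpos by (simp add: divide_less_eq field_simps power2_eq_square)
      qed
      have T3: "ln 2 / q < real n * r * (1 - s) / 16"
      proof -
        have "K < real n" using elim(3) .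
        then have "16 * ln 2 / (q * r * (1 - s)) < real n" unfolding K_def .
        then have "16 * ln 2 < real n * (q * r * (1 - s))" using qpos rpos slt by (simp add: divide_less_eq)
        then show ?thesis using qpos by (simp add: divide_less_eq field_simps)
      qed
      have qr: "q = r * (1 - s) / 2" by (rule q_def)
      define P where "P = real n * r"
      have Ppos: "P > 0" unfolding P_def using npos rpos by simp
      have qn: "q * real n = real n * r * (1 - s) / 2" unfolding qr by simp
      have "Em < real n * r * (1 - s) / 16 + real n * r * (1 - s) / 2 + s * (real n * r * (1 + (1 - s) / 8) / 2) + real n * s * r / 2"
        using bound T1 T2 T2b T3 qn by linarith
      also have "\<dots> = P * ((1 - s) / 16 + (1 - s) / 2 + s * (1 + (1 - s) / 8) / 2 + s / 2)"
        unfolding P_def by (simp add: algebra_simps)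
      also have "\<dots> \<le> P * (1 - (1 - s) / 4)"
      proof (rule mult_left_mono)
        have h: "0 \<le> (1 - s) * (3 - s)" using slt by (intro mult_nonneg_nonneg) auto
        have h2: "s * 512 \<le> 384 + s * (s * 128)" using h by (simp add: algebra_simps)
        show "(1 - s) / 16 + (1 - s) / 2 + s * (1 + (1 - s) / 8) / 2 + s / 2 \<le> 1 - (1 - s) / 4"
          using h2 by (simp add: field_simps)
      qed (use Ppos in simp)
      finally have "Em / P < 1 - (1 - s) / 4" using Ppos by (simp add: divide_less_eq mult.commute)
      then show False using elim(1) unfolding Em_def P_def by simp
    qed
  qed
  have goodE: "\<forall>u\<in>W n. \<forall>v\<in>W n. u \<noteq> v \<longrightarrow> Cv n u v \<le> \<epsilon> * sqrt (Vr n u * Vr n v)" for n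
  proof (intro ballI impI)
    fix u v assume "u \<in> W n" "v \<in> W n" "u \<noteq> v"
    then have "Cv n u v \<le> e * sqrt (Vr n u * Vr n v)" using Wp[of n] unfolding good_def by blast
    also have "\<dots> \<le> \<epsilon> * sqrt (Vr n u * Vr n v)"
    proof (rule mult_right_mono[OF e(3)])
      have "Vr n u \<ge> 0" "Vr n v \<ge> 0" unfolding Vr_def by (auto intro!: integral_nonneg_AE)
      then show "0 \<le> sqrt (Vr n u * Vr n v)" by simp
    qed
    finally show "Cv n u v \<le> \<epsilon> * sqrt (Vr n u * Vr n v)" .
  qed
  show "\<exists>c>0. \<exists>W :: nat \<Rightarrow> 'a set. (\<forall>n. W n \<subseteq> V n) \<and>
           (\<forall>\<^sub>F n in sequentially.
              exp (c * real n) \<le> real (card (W n)) \<and>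
              (\<forall>u\<in>W n. \<forall>v\<in>W n. u \<noteq> v \<longrightarrow>
                 prob_space.expectation (M n) (\<lambda>\<omega>. \<eta> n u \<omega> * \<eta> n v \<omega>)
                   \<le> \<epsilon> * sqrt (prob_space.variance (M n) (\<eta> n u) * prob_space.variance (M n) (\<eta> n v))))"
    using cpos Wp card_ev goodE unfolding Cv_def Vr_def by (intro exI[of _ c] conjI exI[of _ W]) auto
qed


end
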